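(* For all $t\ge1$ and all $\mathbf{x}\in\mathcal{X}$, \[ |\sigma_{\mathrm{fb}[t]}(\mathbf{x})-\widetilde\sigma_{\mathrm{fb}[t]}(\mathbf{x})|\le\sqrt{(L+1)\varepsilon\Big(1+\frac{4\hat K_0^2t^2}{\sigma^4}\Big)}. \]
   Context: $\mathcal{X}$ is a finite subset of the unit ball of $\mathbb{R}^d$. $k$ is a kernel (the exact NTK) with $k(\mathbf{x},\mathbf{x}')\le K_0$ for all $\mathbf{x},\mathbf{x}'$, and $\widetilde k(\mathbf{x},\mathbf{x}')=\langle\nabla_\theta f(\mathbf{x};\theta_0),\nabla_\theta f(\mathbf{x}';\theta_0)\rangle$ is the empirical NTK of a network with $L+1$ layers at initialization $\theta_0$. It is assumed that $|\widetilde k(\mathbf{x},\mathbf{x}')-k(\mathbf{x},\mathbf{x}')|\le(L+1)\varepsilon$ for all $\mathbf{x},\mathbf{x}'\in\mathcal{X}$, that $(L+1)\varepsilon\le1$ and that $\sigma^2\le1$; $\hat K_0=\max\{1,K_0\}$. Queries $\mathbf{x}_1,\mathbf{x}_2,\dots$ are indexed sequentially and $\mathrm{fb}[t]\le t-1$ is the number of observed queries when $\mathbf{x}_t$ is chosen. $\sigma^2_{\mathrm{fb}[t]}(\mathbf{x})=k(\mathbf{x},\mathbf{x})-\mathbf{k}_t(\mathbf{x})^\top(\mathbf{K}_t+\sigma^2I)^{-1}\mathbf{k}_t(\mathbf{x})$ with $\mathbf{k}_t(\mathbf{x})=(k(\mathbf{x},\mathbf{x}_\tau))_{\tau\le\mathrm{fb}[t]}$,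 $\mathbf{K}_t=(k(\mathbf{x}_\tau,\mathbf{x}_{\tau'}))_{\tau,\tau'\le\mathrm{fb}[t]}$; $\widetilde\sigma^2_{\mathrm{fb}[t]}$ is defined identically with $\widetilde k$ in place of $k$. *)

theory Defs
  imports "HOL-Analysis.Analysis" "Jordan_Normal_Form.Gauss_Jordan_Elimination"
begin

definition is_kernel_on :: "'a set \<Rightarrow> ('a \<Rightarrow> 'a \<Rightarrow> real) \<Rightarrow> bool" where
  "is_kernel_on X k \<longleftrightarrow>
     (\<forall>x\<in>X. \<forall>y\<in>X. k x y = k y x) \<and>
     (\<forall>n (z::nat \<Rightarrow> 'a) (c::nat \<Rightarrow> real). (\<forall>i<n. z i \<in> X) \<longrightarrow>
        0 \<le> (\<Sum>i<n. \<Sum>j<n. c i * c j * k (z i) (z j)))"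

text \<open>Gram matrix K_t of the first n observed queries xs 1, ..., xs n
  (row/column index i corresponds to query xs (i+1)).\<close>
definition gram_mat :: "('a \<Rightarrow> 'a \<Rightarrow> real) \<Rightarrow> (nat \<Rightarrow> 'a) \<Rightarrow> nat \<Rightarrow> real mat" where
  "gram_mat k xs n = mat n n (\<lambda>(i,j). k (xs (Suc i)) (xs (Suc j)))"

definition kern_vec :: "('a \<Rightarrow> 'a \<Rightarrow> real) \<Rightarrow> (nat \<Rightarrow> 'a) \<Rightarrow> nat \<Rightarrow> 'a \<Rightarrow> real vec" where
  "kern_vec k xs n x = vec n (\<lambda>i. k x (xs (Suc i)))"

text \<open>Posterior variance sigma^2_n(x) = k(x,x) - k_n(x)^T (K_n + s2 I)^{-1} k_n(x),
  where n = fb[t] is the number of observed queries.\<close>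
definition post_var :: "('a \<Rightarrow> 'a \<Rightarrow> real) \<Rightarrow> (nat \<Rightarrow> 'a) \<Rightarrow> nat \<Rightarrow> real \<Rightarrow> 'a \<Rightarrow> real" where
  "post_var k xs n s2 x =
     k x x - kern_vec k xs n x \<bullet>
       (the (mat_inverse (gram_mat k xs n + s2 \<cdot>\<^sub>m 1\<^sub>m n)) *\<^sub>v kern_vec k xs n x)"

definition post_sd :: "('a \<Rightarrow> 'a \<Rightarrow> real) \<Rightarrow> (nat \<Rightarrow> 'a) \<Rightarrow> nat \<Rightarrow> real \<Rightarrow> 'a \<Rightarrow> real" where
  "post_sd k xs n s2 x = sqrt (post_var k xs n s2 x)"

end

theory Submission
  imports Defs "Jordan_Normal_Form.Determinant"
begin


lemma jnf_part:
  fixes kk :: "'a \<Rightarrow> 'a \<Rightarrow> real"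
  assumes psd: "\<And>e::nat\<Rightarrow>real. 0 \<le> (\<Sum>i<n. \<Sum>j<n. e i * e j * kk (xs (Suc i)) (xs (Suc j)))"
    and s2: "0 < s2"
  shows "\<exists>c. (\<forall>i<n. (\<Sum>j<n. kk (xs (Suc i)) (xs (Suc j)) * c j) + s2 * c i = kk x (xs (Suc i)))
          \<and> post_var kk xs n s2 x = kk x x - (\<Sum>i<n. kk x (xs (Suc i)) * c i)"
proof -
  define A where "A = gram_mat kk xs n + s2 \<cdot>\<^sub>m 1\<^sub>m n"
  have Ac: "A \<in> carrier_mat n n" unfolding A_def gram_mat_def by auto
  have Aij: "A $$ (i,j) = kk (xs (Suc i)) (xs (Suc j)) + (if i = j then s2 else 0)" if "i<n" "j<n" for i j
    using that unfolding A_def gram_mat_def by auto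
  have rowA: "Matrix.row A i \<bullet> v = (\<Sum>j<n. kk (xs (Suc i)) (xs (Suc j)) * v $ j) + s2 * v $ i"
    if "i < n" "v \<in> carrier_vec n" for i v
  proof -
    have "Matrix.row A i \<bullet> v = (\<Sum>j<n. A $$ (i,j) * v $ j)"
      using that Ac unfolding scalar_prod_def by (auto intro!: sum.cong simp: lessThan_atLeast0)
    also have "\<dots> = (\<Sum>j<n. kk (xs (Suc i)) (xs (Suc j)) * v $ j + (if i = j then s2 * v $ j else 0))"
      using that by (auto intro!: sum.cong simp: Aij algebra_simps)
    also have "\<dots> = (\<Sum>j<n. kk (xs (Suc i)) (xs (Suc j)) * v $ j) + s2 * v $ i"
      using that by (simp add: sum.distrib)
    finally show ?thesis .
  qed
  have "Determinant.det A \<noteq> 0"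
  proof
    assume "Determinant.det A = 0"
    then obtain v where v: "v \<in> carrier_vec n" "v \<noteq> 0\<^sub>v n" "A *\<^sub>v v = 0\<^sub>v n"
      using det_0_iff_vec_prod_zero_field[OF Ac] by blast
    have "\<forall>i<n. (\<Sum>j<n. kk (xs (Suc i)) (xs (Suc j)) * v $ j) + s2 * v $ i = 0"
    proof (intro allI impI)
      fix i assume i: "i < n"
      have "(A *\<^sub>v v) $ i = 0" using v(3) i by simp
      then show "(\<Sum>j<n. kk (xs (Suc i)) (xs (Suc j)) * v $ j) + s2 * v $ i = 0"
        using i Ac rowA[OF i v(1)] by simp
    qed
    then have "(\<Sum>i<n. v $ i * ((\<Sum>j<n. kk (xs (Suc i)) (xs (Suc j)) * v $ j) + s2 * v $ i)) = 0"
      by simp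
    then have "(\<Sum>i<n. \<Sum>j<n. v $ i * v $ j * kk (xs (Suc i)) (xs (Suc j))) + s2 * (\<Sum>i<n. v $ i ^ 2) = 0"
      by (simp add: algebra_simps sum.distrib sum_distrib_left sum_distrib_right power2_eq_square)
    moreover have "0 \<le> (\<Sum>i<n. \<Sum>j<n. v $ i * v $ j * kk (xs (Suc i)) (xs (Suc j)))"
      using psd[of "\<lambda>i. v $ i"] .
    moreover have "0 \<le> (\<Sum>i<n. v $ i ^ 2)" by (simp add: sum_nonneg)
    ultimately have "s2 * (\<Sum>i<n. v $ i ^ 2) = 0" using s2 by (smt (verit) mult_nonneg_nonneg)
    then have "(\<Sum>i<n. v $ i ^ 2) = 0" using s2 by simp
    then have "\<forall>i<n. v $ i ^ 2 = 0" by (subst (asm) sum_nonneg_eq_0_iff) auto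
    then have "v = 0\<^sub>v n" using v(1) by (intro eq_vecI) auto
    with v(2) show False by simp
  qed
  then have "A \<in> Units (ring_mat TYPE(real) n ())" by (rule det_non_zero_imp_unit[OF Ac])
  then obtain B where B: "mat_inverse A = Some B"
    proof (cases "mat_inverse A")
    case None
    then have "A \<notin> Units (ring_mat TYPE(real) n ())" by (rule mat_inverse(1)[OF Ac])
    with \<open>A \<in> Units (ring_mat TYPE(real) n ())\<close> show ?thesis by blast
  qed
  note BB = mat_inverse(2)[OF Ac B]
  define kv where "kv = kern_vec kk xs n x"
  have kvc: "kv \<in> carrier_vec n" unfolding kv_def kern_vec_def by simp
  define cv where "cv = B *\<^sub>v kv"
  have cvc: "cv \<in> carrier_vec n" using BB kvc unfolding cv_def by auto
  have "A *\<^sub>v cv = kv" unfolding cv_def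
    using assoc_mult_mat_vec[OF Ac _ kvc, of B] BB kvc by simp
  then have eq: "\<forall>i<n. (\<Sum>j<n. kk (xs (Suc i)) (xs (Suc j)) * cv $ j) + s2 * cv $ i = kk x (xs (Suc i))"
    using rowA[OF _ cvc] Ac unfolding kv_def kern_vec_def
    by (metis carrier_matD(1) index_mult_mat_vec index_vec)
  have pv: "post_var kk xs n s2 x = kk x x - (\<Sum>i<n. kk x (xs (Suc i)) * cv $ i)"
    unfolding post_var_def A_def[symmetric] B kv_def[symmetric] cv_def[symmetric] option.sel
    using cvc unfolding scalar_prod_def kv_def kern_vec_def by (auto simp: lessThan_atLeast0)
  show ?thesis using eq pv by blast
qed



definition Qf :: "(nat \<Rightarrow> nat \<Rightarrow> real) \<Rightarrow> (nat \<Rightarrow> real) \<Rightarrow> real \<Rightarrow> nat \<Rightarrow> real \<Rightarrow> (nat \<Rightarrow> real) \<Rightarrow> real" where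
  "Qf K kv kxx n s2 d = kxx - 2 * (\<Sum>i<n. d i * kv i) + (\<Sum>i<n. \<Sum>j<n. d i * d j * K i j) + s2 * (\<Sum>i<n. (d i)^2)"

lemma eq_sum:
  fixes K :: "nat \<Rightarrow> nat \<Rightarrow> real"
  assumes eq: "\<forall>i<n. (\<Sum>j<n. K i j * c j) + s2 * c i = kv i"
  shows "(\<Sum>i<n. d i * kv i) = (\<Sum>i<n. \<Sum>j<n. d i * c j * K i j) + s2 * (\<Sum>i<n. d i * c i)"
proof -
  have "(\<Sum>i<n. d i * kv i) = (\<Sum>i<n. d i * ((\<Sum>j<n. K i j * c j) + s2 * c i))"
    using eq by simp
  also have "\<dots> = (\<Sum>i<n. \<Sum>j<n. d i * c j * K i j) + s2 * (\<Sum>i<n. d i * c i)"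
    by (simp add: distrib_left sum.distrib sum_distrib_left ac_simps)
  finally show ?thesis .
qed

lemma opt:
  fixes K :: "nat \<Rightarrow> nat \<Rightarrow> real"
  assumes sym: "\<forall>i<n. \<forall>j<n. K i j = K j i"
    and psd: "\<And>e. 0 \<le> (\<Sum>i<n. \<Sum>j<n. e i * e j * K i j)"
    and eq: "\<forall>i<n. (\<Sum>j<n. K i j * c j) + s2 * c i = kv i"
    and s2: "0 < s2"
  shows "kxx - (\<Sum>i<n. kv i * c i) \<le> Qf K kv kxx n s2 d"
proof -
  define e where "e i = d i - c i" for i
  have dd: "(\<Sum>i<n. d i * kv i) = (\<Sum>i<n. \<Sum>j<n. d i * c j * K i j) + s2 * (\<Sum>i<n. d i * c i)"
    by (rule eq_sum[OF eq])
  have cc: "(\<Sum>i<n. c i * kv i) = (\<Sum>i<n. \<Sum>j<n. c i * c j * K i j) + s2 * (\<Sum>i<n. c i * c i)"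
    by (rule eq_sum[OF eq])
  have swap: "(\<Sum>i<n. \<Sum>j<n. c i * d j * K i j) = (\<Sum>i<n. \<Sum>j<n. d i * c j * K i j)"
    apply (subst sum.swap)
    using sym by (auto intro!: sum.cong simp: mult.commute)
  have ee: "(\<Sum>i<n. \<Sum>j<n. e i * e j * K i j) = (\<Sum>i<n. \<Sum>j<n. d i * d j * K i j)
     - (\<Sum>i<n. \<Sum>j<n. d i * c j * K i j) - (\<Sum>i<n. \<Sum>j<n. c i * d j * K i j)
     + (\<Sum>i<n. \<Sum>j<n. c i * c j * K i j)"
    unfolding e_def by (simp add: algebra_simps sum.distrib sum_subtractf)
  have e2: "(\<Sum>i<n. (e i)^2) = (\<Sum>i<n. (d i)^2) - 2 * (\<Sum>i<n. d i * c i) + (\<Sum>i<n. c i * c i)"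
    unfolding e_def by (simp add: power2_eq_square algebra_simps sum.distrib sum_subtractf sum_distrib_left)
  have "0 \<le> (\<Sum>i<n. \<Sum>j<n. e i * e j * K i j) + s2 * (\<Sum>i<n. (e i)^2)"
    using psd[of e] s2 by (simp add: sum_nonneg)
  moreover have "(\<Sum>i<n. kv i * c i) = (\<Sum>i<n. c i * kv i)" by (simp add: mult.commute)
  ultimately show ?thesis unfolding Qf_def using dd cc swap ee e2
    by (simp add: algebra_simps)
qed

lemma nonneg:
  fixes K :: "nat \<Rightarrow> nat \<Rightarrow> real"
  assumes psdx: "\<And>e. 0 \<le> kxx - 2 * (\<Sum>i<n. e i * kv i) + (\<Sum>i<n. \<Sum>j<n. e i * e j * K i j)"
    and eq: "\<forall>i<n. (\<Sum>j<n. K i j * c j) + s2 * c i = kv i"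
    and s2: "0 < s2"
  shows "0 \<le> kxx - (\<Sum>i<n. kv i * c i)"
proof -
  have cc: "(\<Sum>i<n. c i * kv i) = (\<Sum>i<n. \<Sum>j<n. c i * c j * K i j) + s2 * (\<Sum>i<n. c i * c i)"
    by (rule eq_sum[OF eq])
  have "0 \<le> s2 * (\<Sum>i<n. c i * c i)" using s2 by (simp add: sum_nonneg)
  moreover have "(\<Sum>i<n. kv i * c i) = (\<Sum>i<n. c i * kv i)" by (simp add: mult.commute)
  ultimately show ?thesis using psdx[of c] cc by linarith
qed

lemma cs_l1: "((\<Sum>i<n. \<bar>c i\<bar>)::real)^2 \<le> real n * (\<Sum>i<n. (c i)^2)"
proof -
  have "(\<Sum>i<n. 1 * \<bar>c i\<bar>)^2 \<le> (\<Sum>i<n. 1^2) * (\<Sum>i<n. \<bar>c i\<bar>^2)"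
    by (rule Cauchy_Schwarz_ineq_sum)
  then have "(\<Sum>i<n. \<bar>c i\<bar>)^2 \<le> real n * (\<Sum>i<n. \<bar>c i\<bar>^2)" by simp
  then show ?thesis by simp
qed

lemma l1_bound:
  fixes K :: "nat \<Rightarrow> nat \<Rightarrow> real"
  assumes psd: "\<And>e. 0 \<le> (\<Sum>i<n. \<Sum>j<n. e i * e j * K i j)"
    and eq: "\<forall>i<n. (\<Sum>j<n. K i j * c j) + s2 * c i = kv i"
    and s2: "0 < s2"
    and B: "\<forall>i<n. \<bar>kv i\<bar> \<le> B"
  shows "(\<Sum>i<n. \<bar>c i\<bar>) \<le> real n * B / s2"
proof -
  define S where "S = (\<Sum>i<n. \<bar>c i\<bar>)"
  have cc: "(\<Sum>i<n. c i * kv i) = (\<Sum>i<n. \<Sum>j<n. c i * c j * K i j) + s2 * (\<Sum>i<n. c i * c i)"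
    by (rule eq_sum[OF eq])
  have "(\<Sum>i<n. c i * kv i) \<le> (\<Sum>i<n. \<bar>c i\<bar> * B)"
  proof (rule sum_mono)
    fix i assume "i \<in> {..<n}"
    then have "\<bar>kv i\<bar> \<le> B" using B by auto
    then have "\<bar>c i\<bar> * \<bar>kv i\<bar> \<le> \<bar>c i\<bar> * B" by (simp add: mult_left_mono)
    then show "c i * kv i \<le> \<bar>c i\<bar> * B" by (metis abs_ge_self abs_mult order_trans)
  qed
  then have "s2 * (\<Sum>i<n. (c i)^2) \<le> S * B"
    using cc psd[of c] unfolding S_def by (simp add: sum_distrib_right power2_eq_square)
  then have "s2 * S^2 \<le> real n * (S * B)"
    using cs_l1[where n=n and c=c] s2 unfolding S_def
    by (smt (verit) mult_left_mono mult_right_mono of_nat_0_le_iff mult.commute mult.assoc)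
  moreover have S0: "0 \<le> S" unfolding S_def by (simp add: sum_nonneg)
  ultimately show ?thesis
  proof (cases "S = 0")
    case True then show ?thesis using B s2 S0 by (cases "n = 0") (auto simp: S_def intro!: divide_nonneg_pos)
  next
    case False
    with S0 have "S > 0" by simp
    with \<open>s2 * S^2 \<le> real n * (S * B)\<close> have "s2 * S \<le> real n * B"
      by (simp add: power2_eq_square algebra_simps)
    then show ?thesis using s2 unfolding S_def by (simp add: field_simps)
  qed
qed

lemma diff_bound:
  fixes K :: "nat \<Rightarrow> nat \<Rightarrow> real"
  assumes "\<forall>i<n. \<forall>j<n. \<bar>K i j - K' i j\<bar> \<le> \<delta>"
    and "\<forall>i<n. \<bar>kv i - kv' i\<bar> \<le> \<delta>"
    and "\<bar>kxx - kxx'\<bar> \<le> \<delta>"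
  shows "Qf K kv kxx n s2 d - Qf K' kv' kxx' n s2 d \<le> \<delta> * (1 + (\<Sum>i<n. \<bar>d i\<bar>))^2"
proof -
  have d0: "0 \<le> \<delta>" using assms(3) by linarith
  have a: "-2 * (\<Sum>i<n. d i * (kv i - kv' i)) \<le> 2 * \<delta> * (\<Sum>i<n. \<bar>d i\<bar>)"
  proof -
    have "\<bar>\<Sum>i<n. d i * (kv i - kv' i)\<bar> \<le> (\<Sum>i<n. \<bar>d i * (kv i - kv' i)\<bar>)" by (rule sum_abs)
    also have "\<dots> \<le> (\<Sum>i<n. \<bar>d i\<bar> * \<delta>)"
      using assms(2) by (intro sum_mono) (auto simp: abs_mult intro: mult_left_mono)
    also have "\<dots> = \<delta> * (\<Sum>i<n. \<bar>d i\<bar>)"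
      unfolding sum_distrib_left by (rule sum.cong) (simp_all add: mult.commute)
    finally show ?thesis by linarith
  qed
  have b: "(\<Sum>i<n. \<Sum>j<n. d i * d j * (K i j - K' i j)) \<le> \<delta> * (\<Sum>i<n. \<bar>d i\<bar>)^2"
  proof -
    have "(\<Sum>i<n. \<Sum>j<n. d i * d j * (K i j - K' i j)) \<le> (\<Sum>i<n. \<Sum>j<n. \<bar>d i\<bar> * \<bar>d j\<bar> * \<delta>)"
    proof (intro sum_mono)
      fix i j assume "i \<in> {..<n}" "j \<in> {..<n}"
      then have "\<bar>K i j - K' i j\<bar> \<le> \<delta>" using assms(1) by auto
      then have "\<bar>d i\<bar> * \<bar>d j\<bar> * \<bar>K i j - K' i j\<bar> \<le> \<bar>d i\<bar> * \<bar>d j\<bar> * \<delta>"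
        by (simp add: mult_left_mono)
      then show "d i * d j * (K i j - K' i j) \<le> \<bar>d i\<bar> * \<bar>d j\<bar> * \<delta>"
        by (metis abs_ge_self abs_mult order_trans)
    qed
    also have "\<dots> = (\<Sum>i<n. \<Sum>j<n. \<bar>d i\<bar> * \<bar>d j\<bar>) * \<delta>"
      by (simp only: sum_distrib_right)
    also have "\<dots> = (\<Sum>i<n. \<bar>d i\<bar>)^2 * \<delta>"
      by (simp only: power2_eq_square sum_product)
    also have "\<dots> = \<delta> * (\<Sum>i<n. \<bar>d i\<bar>)^2"
      by (rule mult.commute)
    finally show ?thesis .
  qed
  have "Qf K kv kxx n s2 d - Qf K' kv' kxx' n s2 d = (kxx - kxx') - 2 * (\<Sum>i<n. d i * (kv i - kv' i))
      + (\<Sum>i<n. \<Sum>j<n. d i * d j * (K i j - K' i j))"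
    unfolding Qf_def by (simp add: algebra_simps sum_subtractf)
  also have "\<dots> \<le> \<delta> + 2 * \<delta> * (\<Sum>i<n. \<bar>d i\<bar>) + \<delta> * (\<Sum>i<n. \<bar>d i\<bar>)^2"
    using a b assms(3) by linarith
  also have "\<dots> = \<delta> * (1 + (\<Sum>i<n. \<bar>d i\<bar>))^2" by (simp add: power2_eq_square algebra_simps)
  finally show ?thesis .
qed



lemma two_point:
  fixes kk :: "'a \<Rightarrow> 'a \<Rightarrow> real"
  assumes "is_kernel_on S kk" "a \<in> S" "b \<in> S" "kk a a \<le> M" "kk b b \<le> M"
  shows "\<bar>kk a b\<bar> \<le> M"
proof -
  have sym: "kk b a = kk a b" using assms(1-3) unfolding is_kernel_on_def by auto
  have psd: "0 \<le> (\<Sum>i<2. \<Sum>j<2. c i * c j * kk (z i) (z j))" if "\<forall>i<(2::nat). z i \<in> S" for z and c :: "nat \<Rightarrow> real"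
    using assms(1) that unfolding is_kernel_on_def by blast
  define z where "z = (\<lambda>i::nat. if i = 0 then a else b)"
  have zS: "\<forall>i<2. z i \<in> S" using assms unfolding z_def by auto
  have h: "0 \<le> kk a a + 2 * s * kk a b + s * s * kk b b" for s
    using psd[OF zS, of "\<lambda>i. if i = 0 then 1 else s"] sym
    by (simp add: numeral_2_eq_2 z_def algebra_simps)
  show ?thesis using h[of 1] h[of "-1"] assms(4,5) by auto
qed

lemma psdx:
  fixes kk :: "'a \<Rightarrow> 'a \<Rightarrow> real" and z :: "nat \<Rightarrow> 'a"
  assumes "is_kernel_on S kk" "x \<in> S" "\<forall>i. z i \<in> S"
  shows "0 \<le> kk x x - 2 * (\<Sum>i<n. e i * kk x (z i)) + (\<Sum>i<n. \<Sum>j<n. e i * e j * kk (z i) (z j))"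
proof -
  have sym: "kk (z i) x = kk x (z i)" for i using assms unfolding is_kernel_on_def by auto
  define z' where "z' = (\<lambda>i. if i = 0 then x else z (i - 1))"
  define c where "c = (\<lambda>i. if i = 0 then 1 else - e (i - 1))"
  have "\<forall>i<Suc n. z' i \<in> S" using assms unfolding z'_def by auto
  then have "0 \<le> (\<Sum>i<Suc n. \<Sum>j<Suc n. c i * c j * kk (z' i) (z' j))"
    using assms(1) unfolding is_kernel_on_def by blast
  also have "\<dots> = kk x x - 2 * (\<Sum>i<n. e i * kk x (z i)) + (\<Sum>i<n. \<Sum>j<n. e i * e j * kk (z i) (z j))"
    unfolding sum.lessThan_Suc_shift by (simp add: z'_def c_def sym sum.distrib sum_negf sum_subtractf algebra_simps)
  finally show ?thesis .
qed

lemma kt_kernel: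
  fixes grad :: "'a \<Rightarrow> 'p::real_inner"
  shows "is_kernel_on UNIV (\<lambda>y z. inner (grad y) (grad z))"
  unfolding is_kernel_on_def
proof (intro conjI allI impI ballI)
  fix y z show "inner (grad y) (grad z) = inner (grad z) (grad y)" by (rule inner_commute)
next
  fix n and z :: "nat \<Rightarrow> 'a" and c :: "nat \<Rightarrow> real"
  have "(\<Sum>i<n. \<Sum>j<n. c i * c j * inner (grad (z i)) (grad (z j)))
      = inner (\<Sum>i<n. c i *\<^sub>R grad (z i)) (\<Sum>j<n. c j *\<^sub>R grad (z j))"
    by (simp only: inner_sum_left) (simp only: inner_sum_right inner_scaleR_left inner_scaleR_right mult.assoc sum_distrib_left, rule sum.cong, simp, rule sum.cong, simp, simp only: mult.left_commute)
  then show "0 \<le> (\<Sum>i<n. \<Sum>j<n. c i * c j * inner (grad (z i)) (grad (z j)))" by simp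
qed

lemma sqrt_diff: assumes "0 \<le> a" "0 \<le> b" shows "\<bar>sqrt a - sqrt b\<bar> \<le> sqrt \<bar>a - b\<bar>"
proof -
  have *: "sqrt p \<le> sqrt q + sqrt (p - q)" if "0 \<le> q" "q \<le> p" for p q :: real
    using sqrt_add_le_add_sqrt[of q "p - q"] that by simp
  show ?thesis using *[of b a] *[of a b] assms by (cases "b \<le> a") (auto simp: abs_if)
qed



lemma Qf_at:
  fixes K :: "nat \<Rightarrow> nat \<Rightarrow> real"
  assumes eq: "\<forall>i<n. (\<Sum>j<n. K i j * c j) + s2 * c i = kv i"
  shows "Qf K kv kxx n s2 c = kxx - (\<Sum>i<n. kv i * c i)"
proof -
  have cc: "(\<Sum>i<n. c i * kv i) = (\<Sum>i<n. \<Sum>j<n. c i * c j * K i j) + s2 * (\<Sum>i<n. c i * c i)"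
    by (rule eq_sum[OF eq])
  moreover have "(\<Sum>i<n. kv i * c i) = (\<Sum>i<n. c i * kv i)" by (simp add: mult.commute)
  ultimately show ?thesis unfolding Qf_def by (simp add: power2_eq_square)
qed

theorem lemma9:
  fixes X :: "(real ^ 'd) set"
    and k :: "real ^ 'd \<Rightarrow> real ^ 'd \<Rightarrow> real"
    and kt :: "real ^ 'd \<Rightarrow> real ^ 'd \<Rightarrow> real"
    and grad :: "real ^ 'd \<Rightarrow> 'p::euclidean_space"
    and K0 :: real and L :: nat and eps :: real and s2 :: real
    and xs :: "nat \<Rightarrow> real ^ 'd" and fb :: "nat \<Rightarrow> nat"
    and t :: nat and x :: "real ^ 'd"
  assumes "finite X" and "X \<subseteq> cball 0 1"
    and "is_kernel_on X k"
    and "\<forall>y\<in>X. \<forall>z\<in>X. k y z \<le> K0"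
    and "\<forall>y z. kt y z = grad y \<bullet> grad z"
    and "\<forall>y\<in>X. \<forall>z\<in>X. \<bar>kt y z - k y z\<bar> \<le> (real L + 1) * eps"
    and "(real L + 1) * eps \<le> 1"
    and "0 < s2" and "s2 \<le> 1"
    and "\<forall>\<tau>\<ge>1. xs \<tau> \<in> X"
    and "\<forall>\<tau>\<ge>1. fb \<tau> \<le> \<tau> - 1"
    and "1 \<le> t" and "x \<in> X"
  shows "\<bar>post_sd k xs (fb t) s2 x - post_sd kt xs (fb t) s2 x\<bar>
         \<le> sqrt ((real L + 1) * eps *
                 (1 + 4 * (max 1 K0)\<^sup>2 * (real t)\<^sup>2 / s2\<^sup>2))"
proof -
  note kern = assms(3) and s2 = assms(8)
  define \<delta> where "\<delta> = (real L + 1) * eps"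
  define Kh where "Kh = max 1 K0"
  define n where "n = fb t"
  define z where "z i = xs (Suc i)" for i
  have zX: "\<forall>i. z i \<in> X" using assms(10) unfolding z_def by auto
  have "fb t \<le> t - 1" using assms(11,12) by blast
  then have nt: "real n + 1 \<le> real t" using assms(12) unfolding n_def by linarith
  have dd: "\<bar>kt y y' - k y y'\<bar> \<le> \<delta>" if "y \<in> X" "y' \<in> X" for y y'
    using assms(6) that unfolding \<delta>_def by blast
  have dd': "\<bar>k y y' - kt y y'\<bar> \<le> \<delta>" if "y \<in> X" "y' \<in> X" for y y'
    using dd[OF that] by (simp add: abs_minus_commute)
  have d0: "0 \<le> \<delta>" using dd[OF assms(13) assms(13)] by linarith
  have d1: "\<delta> \<le> 1" using assms(7) unfolding \<delta>_def by simp
  have ktdef: "kt = (\<lambda>y z. grad y \<bullet> grad z)" using assms(5) by auto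
  have ktk: "is_kernel_on UNIV kt" unfolding ktdef by (rule kt_kernel)
  have kpsd: "\<And>e. 0 \<le> (\<Sum>i<n. \<Sum>j<n. e i * e j * k (xs (Suc i)) (xs (Suc j)))"
    using kern[unfolded is_kernel_on_def, THEN conjunct2, rule_format, of n "\<lambda>i. xs (Suc i)"] zX
    unfolding z_def by auto
  have ktpsd: "\<And>e. 0 \<le> (\<Sum>i<n. \<Sum>j<n. e i * e j * kt (xs (Suc i)) (xs (Suc j)))"
    using ktk[unfolded is_kernel_on_def, THEN conjunct2, rule_format, of n "\<lambda>i. xs (Suc i)"] by auto
  obtain c where c_eq: "\<forall>i<n. (\<Sum>j<n. k (z i) (z j) * c j) + s2 * c i = k x (z i)"
      and c_pv: "post_var k xs n s2 x = k x x - (\<Sum>i<n. k x (z i) * c i)"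
    using jnf_part[where kk=k and xs=xs and n=n and x=x, OF kpsd s2] unfolding z_def by blast
  obtain c' where c'_eq: "\<forall>i<n. (\<Sum>j<n. kt (z i) (z j) * c' j) + s2 * c' i = kt x (z i)"
      and c'_pv: "post_var kt xs n s2 x = kt x x - (\<Sum>i<n. kt x (z i) * c' i)"
    using jnf_part[where kk=kt and xs=xs and n=n and x=x, OF ktpsd s2] unfolding z_def by blast
  define K where "K i j = k (z i) (z j)" for i j
  define K' where "K' i j = kt (z i) (z j)" for i j
  define kv where "kv i = k x (z i)" for i
  define kv' where "kv' i = kt x (z i)" for i
  have Ksym: "\<forall>i<n. \<forall>j<n. K i j = K j i" using kern zX unfolding K_def is_kernel_on_def by auto
  have K'sym: "\<forall>i<n. \<forall>j<n. K' i j = K' j i" using ktk unfolding K'_def is_kernel_on_def by auto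
  have Kpsd: "\<And>e. 0 \<le> (\<Sum>i<n. \<Sum>j<n. e i * e j * K i j)" using kpsd unfolding K_def z_def .
  have K'psd: "\<And>e. 0 \<le> (\<Sum>i<n. \<Sum>j<n. e i * e j * K' i j)" using ktpsd unfolding K'_def z_def .
  have ceq: "\<forall>i<n. (\<Sum>j<n. K i j * c j) + s2 * c i = kv i" using c_eq unfolding K_def kv_def .
  have c'eq: "\<forall>i<n. (\<Sum>j<n. K' i j * c' j) + s2 * c' i = kv' i" using c'_eq unfolding K'_def kv'_def .
  have pv: "post_var k xs n s2 x = k x x - (\<Sum>i<n. kv i * c i)" using c_pv unfolding kv_def .
  have pv': "post_var kt xs n s2 x = kt x x - (\<Sum>i<n. kv' i * c' i)" using c'_pv unfolding kv'_def .
  have pv0: "0 \<le> post_var k xs n s2 x"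
    unfolding pv by (rule nonneg[OF _ ceq s2]) (use psdx[OF kern assms(13) zX] in \<open>simp add: K_def kv_def\<close>)
  have pv'0: "0 \<le> post_var kt xs n s2 x"
    unfolding pv' by (rule nonneg[OF _ c'eq s2]) (use psdx[OF ktk _ , of x z] in \<open>simp add: K'_def kv'_def\<close>)
  have kdiag: "k y y \<le> K0" if "y \<in> X" for y using assms(4) that by auto
  have ktdiag: "kt y y \<le> K0 + \<delta>" if "y \<in> X" for y
    using dd[OF that that] kdiag[OF that] by linarith
  have kbnd: "\<bar>kv i\<bar> \<le> Kh" for i
    using two_point[OF kern assms(13) zX[rule_format, of i] kdiag[OF assms(13)] kdiag[OF zX[rule_format, of i]]]
    unfolding kv_def Kh_def by linarith
  have kt'bnd: "\<bar>kv' i\<bar> \<le> K0 + \<delta>" for i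
    using two_point[OF ktk _ _ ktdiag[OF assms(13)] ktdiag[OF zX[rule_format, of i]]]
    unfolding kv'_def by simp
  have Kh1: "1 \<le> Kh" unfolding Kh_def by simp
  have kt'bnd2: "\<bar>kv' i\<bar> \<le> 2 * Kh" for i using kt'bnd[of i] d1 unfolding Kh_def by linarith
  define a where "a = real n * (2 * Kh) / s2"
  have a0: "0 \<le> a" unfolding a_def using s2 Kh1 by simp
  have S: "(\<Sum>i<n. \<bar>c i\<bar>) \<le> a"
  proof -
    have "(\<Sum>i<n. \<bar>c i\<bar>) \<le> real n * Kh / s2" by (rule l1_bound[OF Kpsd ceq s2]) (use kbnd in auto)
    also have "\<dots> \<le> a" unfolding a_def using s2 Kh1 by (simp add: divide_right_mono)
    finally show ?thesis .
  qed
  have S': "(\<Sum>i<n. \<bar>c' i\<bar>) \<le> a"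
    unfolding a_def by (rule l1_bound[OF K'psd c'eq s2]) (use kt'bnd2 in auto)
  have Kd: "\<forall>i<n. \<forall>j<n. \<bar>K i j - K' i j\<bar> \<le> \<delta>" "\<forall>i<n. \<forall>j<n. \<bar>K' i j - K i j\<bar> \<le> \<delta>"
    using dd dd' zX unfolding K_def K'_def by blast+
  have kvd: "\<forall>i<n. \<bar>kv i - kv' i\<bar> \<le> \<delta>" "\<forall>i<n. \<bar>kv' i - kv i\<bar> \<le> \<delta>"
    using dd dd' zX assms(13) unfolding kv_def kv'_def by blast+
  have xd: "\<bar>k x x - kt x x\<bar> \<le> \<delta>" "\<bar>kt x x - k x x\<bar> \<le> \<delta>"
    using dd dd' assms(13) by blast+
  have sq: "\<delta> * (1 + s)^2 \<le> \<delta> * (1 + a)^2" if "0 \<le> s" "s \<le> a" for s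
    using that d0 by (intro mult_left_mono power_mono) auto
  have up: "post_var k xs n s2 x - post_var kt xs n s2 x \<le> \<delta> * (1 + a)^2"
  proof -
    have "post_var k xs n s2 x \<le> Qf K kv (k x x) n s2 c'"
      unfolding pv by (rule opt[OF Ksym Kpsd ceq s2])
    moreover have "post_var kt xs n s2 x = Qf K' kv' (kt x x) n s2 c'"
      unfolding pv' by (rule Qf_at[OF c'eq, symmetric])
    moreover have "Qf K kv (k x x) n s2 c' - Qf K' kv' (kt x x) n s2 c' \<le> \<delta> * (1 + (\<Sum>i<n. \<bar>c' i\<bar>))^2"
      by (rule diff_bound[OF Kd(1) kvd(1) xd(1)])
    moreover have "\<delta> * (1 + (\<Sum>i<n. \<bar>c' i\<bar>))^2 \<le> \<delta> * (1 + a)^2"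
      by (rule sq[OF _ S']) (simp add: sum_nonneg)
    ultimately show ?thesis by linarith
  qed
  have down: "post_var kt xs n s2 x - post_var k xs n s2 x \<le> \<delta> * (1 + a)^2"
  proof -
    have "post_var kt xs n s2 x \<le> Qf K' kv' (kt x x) n s2 c"
      unfolding pv' by (rule opt[OF K'sym K'psd c'eq s2])
    moreover have "post_var k xs n s2 x = Qf K kv (k x x) n s2 c"
      unfolding pv by (rule Qf_at[OF ceq, symmetric])
    moreover have "Qf K' kv' (kt x x) n s2 c - Qf K kv (k x x) n s2 c \<le> \<delta> * (1 + (\<Sum>i<n. \<bar>c i\<bar>))^2"
      by (rule diff_bound[OF Kd(2) kvd(2) xd(2)])
    moreover have "\<delta> * (1 + (\<Sum>i<n. \<bar>c i\<bar>))^2 \<le> \<delta> * (1 + a)^2"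
      by (rule sq[OF _ S]) (simp add: sum_nonneg)
    ultimately show ?thesis by linarith
  qed
  define b where "b = 2 * Kh * real t / s2"
  have ab: "a + 2 \<le> b"
  proof -
    have "a + 2 * Kh / s2 = 2 * Kh * (real n + 1) / s2" unfolding a_def using s2 by (simp add: field_simps)
    also have "\<dots> \<le> b" unfolding b_def using nt s2 Kh1 by (intro divide_right_mono) auto
    finally have "a + 2 * Kh / s2 \<le> b" .
    moreover have "2 \<le> 2 * Kh / s2" using s2 assms(9) Kh1 by (simp add: field_simps)
    ultimately show ?thesis by linarith
  qed
  have "(1 + a)^2 \<le> 1 + b^2"
  proof -
    have "(a + 2)^2 \<le> b^2" using ab a0 by (intro power_mono) auto
    then show ?thesis using a0 by (simp add: power2_eq_square algebra_simps)
  qed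
  moreover have "b^2 = 4 * Kh^2 * (real t)^2 / s2^2" unfolding b_def by (simp add: power_divide power_mult_distrib)
  ultimately have final: "\<delta> * (1 + a)^2 \<le> \<delta> * (1 + 4 * Kh^2 * (real t)^2 / s2^2)"
    using d0 by (intro mult_left_mono) auto
  have "\<bar>post_sd k xs n s2 x - post_sd kt xs n s2 x\<bar>
      \<le> sqrt \<bar>post_var k xs n s2 x - post_var kt xs n s2 x\<bar>"
    unfolding post_sd_def by (rule sqrt_diff[OF pv0 pv'0])
  also have "\<dots> \<le> sqrt (\<delta> * (1 + 4 * Kh^2 * (real t)^2 / s2^2))"
    using up down final by (intro real_sqrt_le_mono) linarith
  finally show ?thesis unfolding n_def \<delta>_def Kh_def .
qed


end
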